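(* Let $x,y_1,\dots,y_k$ be pairwise distinct commuting indeterminates. Then, as an identity of operators on $\mathbb{V}_N$ with coefficients in the rational function field $\mathbb{C}(x,y_1,\dots,y_k)$, $$A(x)C(y_k)\cdots C(y_1)=\frac{C(y_k)\cdots C(y_1)A(x)}{(x-y_k)\cdots(x-y_1)}-\sum_{i=1}^k\frac{C(y_k)\cdots C(y_{i+1})\,C(x)\,C(y_{i-1})\cdots C(y_1)\,A(y_i)}{(x-y_i)\prod_{j\ne i}(y_i-y_j)},$$ i.e. in the $i$-th summand the factor $C(y_i)$ is replaced by $C(x)$.
   Context: Fix $N\ge2$. $V=\mathbb{C}^2$ with basis $v_0,v_1$, ${\bf P}=\mathbb{C}[t_1,\dots,t_N]$, $\mathbb{V}_N=V^{\otimes N}\otimes{\bf P}$. Matrices on $V\otimes V$ are in the ordered basis $v_0\otimes v_0,v_0\otimes v_1,v_1\otimes v_0,v_1\otimes v_1$ (columns = images); $L(x,t)=\begin{pmatrix}1&0&0&0\\0&x+t&1&0\\0&1&0&0\\0&0&0&1\end{pmatrix}$. On $V[x]\otimes\mathbb{V}_N$ (factors $0,\dots,N$) let $M(x)=L_{0N}(x,t_N)\cdots L_{01}(x,t_1)$, with $L_{0j}(x,t_j)$ acting as $L(x,t_j)$ on factors $0,j$ (factor $0$ first) and trivially elsewhere. Define operators $A(x),C(x)$ on $\mathbb{V}_N[x]$ (polynomial in $x$) by $M(x)(v_0\otimes w)=v_0\otimes A(x)w+v_1\otimes C(x)w$; $A(y),C(y)$ denote the same operators with $x$ replaced by $y$.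 *)

theory Defs
  imports Complex_Main
begin

text \<open>Basis of V = C^2: v_0 ~ False, v_1 ~ True.  A basis state of V^{(x)N} is a
  function s :: nat => bool (s j = the index of the vector in tensor factor j, j = 1..N).
  Vectors of V_N (with the polynomial variables t_j specialised to complex values)
  are functions from basis states to complex numbers; vectors of V (x) V_N
  (auxiliary factor 0 first) are functions bool => state => complex.\<close>

type_synonym state = "nat \<Rightarrow> bool"
type_synonym vec = "state \<Rightarrow> complex"
type_synonym vec0 = "bool \<Rightarrow> state \<Rightarrow> complex"

definition bidx :: "bool \<Rightarrow> bool \<Rightarrow> nat" where
  "bidx a b = 2 * (if a then 1 else 0) + (if b then 1 else 0)"

text \<open>The 4x4 matrix L(x,t) in the ordered basis v0v0, v0v1, v1v0, v1v1
  (indices 0..3); entry (r,c) is the coefficient of basis vector r in the image of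
  basis vector c.\<close>
definition Lmat :: "complex \<Rightarrow> complex \<Rightarrow> nat \<Rightarrow> nat \<Rightarrow> complex" where
  "Lmat x t r c =
     (if r = 0 \<and> c = 0 then 1
      else if r = 1 \<and> c = 1 then x + t
      else if r = 1 \<and> c = 2 then 1
      else if r = 2 \<and> c = 1 then 1
      else if r = 3 \<and> c = 3 then 1
      else 0)"

text \<open>L_{0j}(x,t): acts as L(x,t) on factors 0 and j, trivially elsewhere.\<close>
definition Lop :: "nat \<Rightarrow> complex \<Rightarrow> complex \<Rightarrow> vec0 \<Rightarrow> vec0" where
  "Lop j x tj f = (\<lambda>a' s'. \<Sum>a\<in>UNIV. \<Sum>b\<in>UNIV.
      Lmat x tj (bidx a' (s' j)) (bidx a b) * f a (s'(j := b)))"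

primrec Mop :: "complex \<Rightarrow> (nat \<Rightarrow> complex) \<Rightarrow> nat \<Rightarrow> vec0 \<Rightarrow> vec0" where
  "Mop x t 0 f = f"
| "Mop x t (Suc n) f = Lop (Suc n) x (t (Suc n)) (Mop x t n f)"

definition lift0 :: "vec \<Rightarrow> vec0" where
  "lift0 w = (\<lambda>a s. if a then 0 else w s)"

text \<open>M(x)(v_0 (x) w) = v_0 (x) A(x)w + v_1 (x) C(x)w.\<close>
definition Aop :: "nat \<Rightarrow> (nat \<Rightarrow> complex) \<Rightarrow> complex \<Rightarrow> vec \<Rightarrow> vec" where
  "Aop N t x w = (\<lambda>s. Mop x t N (lift0 w) False s)"

definition Cop :: "nat \<Rightarrow> (nat \<Rightarrow> complex) \<Rightarrow> complex \<Rightarrow> vec \<Rightarrow> vec" where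
  "Cop N t x w = (\<lambda>s. Mop x t N (lift0 w) True s)"

primrec Cprod :: "nat \<Rightarrow> (nat \<Rightarrow> complex) \<Rightarrow> (nat \<Rightarrow> complex) \<Rightarrow> nat \<Rightarrow> vec \<Rightarrow> vec" where
  "Cprod N t z 0 w = w"
| "Cprod N t z (Suc m) w = Cop N t (z (Suc m)) (Cprod N t z m w)"

end

theory Submission
  imports Defs
begin


lemma Lop_eval: "Lop j x tj f a s =
  (if a then (if s j then f True s else f False (s(j:=True)))
   else (if s j then (x+tj) * f False s + f True (s(j:=False)) else f False s))"
  by (cases a; cases "s j") (simp_all add: Lop_def UNIV_bool Lmat_def bidx_def fun_upd_idem)

definition Op :: "nat \<Rightarrow> (nat \<Rightarrow> complex) \<Rightarrow> complex \<Rightarrow> bool \<Rightarrow> vec \<Rightarrow> vec" where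
  "Op n t x b w s = Mop x t n (lift0 w) b s"

lemma Mop_add: "Mop x t n (\<lambda>a s. f a s + g a s) a s = Mop x t n f a s + Mop x t n g a s"
  by (induction n arbitrary: a s) (auto simp: Lop_eval algebra_simps)

lemma Mop_scale: "Mop x t n (\<lambda>a s. c * f a s) a s = c * Mop x t n f a s"
  by (induction n arbitrary: a s) (auto simp: Lop_eval algebra_simps)

lemma Mop_L1: "j > n \<Longrightarrow> Mop x t n (\<lambda>a s'. G (s' j) a s') a s = Mop x t n (G (s j)) a s"
  by (induction n arbitrary: a s) (auto simp: Lop_eval)

lemma Mop_L2: "j > n \<Longrightarrow> Mop x t n (\<lambda>a s'. f a (s'(j:=c))) a s = Mop x t n f a (s(j:=c))"
  by (induction n arbitrary: a s) (auto simp: Lop_eval fun_upd_twist)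

lemma Op_add: "Op n t x b (\<lambda>s. f s + g s) s = Op n t x b f s + Op n t x b g s"
proof -
  have "lift0 (\<lambda>s. f s + g s) = (\<lambda>a s. lift0 f a s + lift0 g a s)"
    by (auto simp: lift0_def fun_eq_iff)
  then show ?thesis by (simp add: Op_def Mop_add)
qed

lemma Op_scale: "Op n t x b (\<lambda>s. c * f s) s = c * Op n t x b f s"
proof -
  have "lift0 (\<lambda>s. c * f s) = (\<lambda>a s. c * lift0 f a s)"
    by (auto simp: lift0_def fun_eq_iff)
  then show ?thesis by (simp add: Op_def Mop_scale)
qed

lemma Op_L1: "j > n \<Longrightarrow> Op n t x b (\<lambda>s'. W (s' j) s') s = Op n t x b (W (s j)) s"
proof -
  assume j: "j > n"
  have "lift0 (\<lambda>s'. W (s' j) s') = (\<lambda>a s'. (\<lambda>c. lift0 (W c)) (s' j) a s')"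
    by (auto simp: lift0_def fun_eq_iff)
  then show ?thesis using Mop_L1[OF j, of x t "\<lambda>c. lift0 (W c)"] by (simp add: Op_def)
qed

lemma Op_L2: "j > n \<Longrightarrow> Op n t x b (\<lambda>s'. w (s'(j:=c))) s = Op n t x b w (s(j:=c))"
proof -
  assume j: "j > n"
  have "lift0 (\<lambda>s'. w (s'(j:=c))) = (\<lambda>a s'. lift0 w a (s'(j:=c)))"
    by (auto simp: lift0_def fun_eq_iff)
  then show ?thesis using Mop_L2[OF j, of x t "lift0 w"] by (simp add: Op_def)
qed

lemma Op_recF: "Op (Suc n) t x False v s = (if s (Suc n) then (x + t (Suc n)) * Op n t x False v s
   + Op n t x True v (s(Suc n := False)) else Op n t x False v s)"
  by (simp add: Op_def Lop_eval)

lemma Op_recT: "Op (Suc n) t x True v s = (if s (Suc n) then Op n t x True v s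
   else Op n t x False v (s(Suc n := True)))"
  by (simp add: Op_def Lop_eval)

lemma Op_A: "Op n t x b (Op (Suc n) t y False w) s =
  (if s (Suc n) then (y + t (Suc n)) * Op n t x b (Op n t y False w) s
     + Op n t x b (Op n t y True w) (s(Suc n := False))
   else Op n t x b (Op n t y False w) s)"
proof -
  define W where "W = (\<lambda>c. if c then (\<lambda>s'. (y + t (Suc n)) * Op n t y False w s'
     + Op n t y True w (s'(Suc n := False))) else Op n t y False w)"
  have "Op (Suc n) t y False w = (\<lambda>s'. W (s' (Suc n)) s')"
    by (auto simp: fun_eq_iff W_def Op_recF)
  then have "Op n t x b (Op (Suc n) t y False w) s = Op n t x b (W (s (Suc n))) s"
    using Op_L1[of n "Suc n" t x b W s] by simp
  then show ?thesis
    by (simp add: W_def Op_add Op_scale Op_L2)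
qed

lemma Op_C: "Op n t x b (Op (Suc n) t y True w) s =
  (if s (Suc n) then Op n t x b (Op n t y True w) s
   else Op n t x b (Op n t y False w) (s(Suc n := True)))"
proof -
  define W where "W = (\<lambda>c. if c then Op n t y True w else (\<lambda>s'. Op n t y False w (s'(Suc n := True))))"
  have "Op (Suc n) t y True w = (\<lambda>s'. W (s' (Suc n)) s')"
    by (auto simp: fun_eq_iff W_def Op_recT)
  then have "Op n t x b (Op (Suc n) t y True w) s = Op n t x b (W (s (Suc n))) s"
    using Op_L1[of n "Suc n" t x b W s] by simp
  then show ?thesis
    by (simp add: W_def Op_L2)
qed


lemma rels: "\<forall>x y w s.
   Op n t x False (Op n t y False w) s = Op n t y False (Op n t x False w) s \<and>
   Op n t x True (Op n t y True w) s = Op n t y True (Op n t x True w) s \<and>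
   Op n t x False (Op n t y True w) s = Op n t y False (Op n t x True w) s \<and>
   (x - y) * Op n t x False (Op n t y True w) s =
     Op n t y True (Op n t x False w) s - Op n t x True (Op n t y False w) s"
proof (induction n)
  case 0
  then show ?case by (simp add: Op_def lift0_def)
next
  case (Suc n)
  show ?case
  proof (intro allI)
    fix x y w s
    let ?j = "Suc n"
    let ?tj = "t (Suc n)"
    let ?sF = "s(Suc n := False)"
    let ?sT = "s(Suc n := True)"
    have AA: "\<And>x y s. Op n t x False (Op n t y False w) s = Op n t y False (Op n t x False w) s"
      using Suc by blast
    have CC: "\<And>x y s. Op n t x True (Op n t y True w) s = Op n t y True (Op n t x True w) s"
      using Suc by blast
    have AC: "\<And>x y s. Op n t x False (Op n t y True w) s = Op n t y False (Op n t x True w) s"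
      using Suc by blast
    have R: "\<And>x y s. Op n t y True (Op n t x False w) s = (x - y) * Op n t x False (Op n t y True w) s
        + Op n t x True (Op n t y False w) s"
    proof -
      fix x y s
      have R0: "(x - y) * Op n t x False (Op n t y True w) s =
     Op n t y True (Op n t x False w) s - Op n t x True (Op n t y False w) s" using Suc by blast
      then show "Op n t y True (Op n t x False w) s = (x - y) * Op n t x False (Op n t y True w) s
        + Op n t x True (Op n t y False w) s" by (metis diff_add_cancel)
    qed
    show "Op (Suc n) t x False (Op (Suc n) t y False w) s = Op (Suc n) t y False (Op (Suc n) t x False w) s \<and>
       Op (Suc n) t x True (Op (Suc n) t y True w) s = Op (Suc n) t y True (Op (Suc n) t x True w) s \<and>
       Op (Suc n) t x False (Op (Suc n) t y True w) s = Op (Suc n) t y False (Op (Suc n) t x True w) s \<and>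
       (x - y) * Op (Suc n) t x False (Op (Suc n) t y True w) s =
       Op (Suc n) t y True (Op (Suc n) t x False w) s - Op (Suc n) t x True (Op (Suc n) t y False w) s"
    proof (cases "s (Suc n)")
      case True
      then show ?thesis
        using True by (simp add: Op_recF Op_recT Op_A Op_C fun_upd_idem AA[of x y s] CC[of x y s] CC[of x y ?sF] AC[of x y s] AC[of x y ?sF]
           R[of x y s] R[of x y ?sF] AA[of x y ?sT] CC[of x y ?sT] AC[of x y ?sT] R[of x y ?sT] AA[of x y ?sF] algebra_simps)
    next
      case False
      then show ?thesis
        using False by (simp add: Op_recF Op_recT Op_A Op_C fun_upd_idem AA[of x y s] CC[of x y s] CC[of x y ?sF] AC[of x y s] AC[of x y ?sF]
           R[of x y s] R[of x y ?sF] AA[of x y ?sT] CC[of x y ?sT] AC[of x y ?sT] R[of x y ?sT] AA[of x y ?sF] algebra_simps)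
    qed
  qed
qed


lemma AopOp: "Aop n t x = Op n t x False" and CopOp: "Cop n t x = Op n t x True"
  by (auto simp: fun_eq_iff Aop_def Cop_def Op_def)

lemma CC: "Cop n t a (Cop n t b w) = Cop n t b (Cop n t a w)"
  using rels[of n t] by (auto simp: fun_eq_iff CopOp)

lemma ACrel: "x \<noteq> y \<Longrightarrow> Aop n t x (Cop n t y w) s =
   (Cop n t y (Aop n t x w) s - Cop n t x (Aop n t y w) s) / (x - y)"
proof -
  assume "x \<noteq> y"
  moreover have "(x - y) * Aop n t x (Cop n t y w) s = Cop n t y (Aop n t x w) s - Cop n t x (Aop n t y w) s"
    using rels[of n t] by (simp add: CopOp AopOp)
  ultimately show ?thesis by (simp add: field_simps)
qed

lemma Cop_diff: "Cop n t x (\<lambda>s. f s - g s) s = Cop n t x f s - Cop n t x g s"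
proof -
  have "Cop n t x (\<lambda>s. f s - g s) s = Op n t x True (\<lambda>s. f s + (-1) * g s) s" by (simp add: CopOp)
  also have "\<dots> = Op n t x True f s + Op n t x True (\<lambda>s. (-1) * g s) s" by (rule Op_add)
  also have "\<dots> = Op n t x True f s + (-1) * Op n t x True g s" by (simp only: Op_scale)
  finally show ?thesis by (simp add: CopOp)
qed

lemma Cop_div: "Cop n t x (\<lambda>s. f s / c) s = Cop n t x f s / c"
proof -
  have "Cop n t x (\<lambda>s. f s / c) s = Op n t x True (\<lambda>s. (1/c) * f s) s" by (simp add: CopOp)
  also have "\<dots> = (1/c) * Op n t x True f s" by (simp only: Op_scale)
  finally show ?thesis by (simp add: CopOp)
qed

lemma Cop_zero: "Cop n t x (\<lambda>s. 0) s = 0"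
  using Op_scale[of n t x True 0 "\<lambda>s. 0" s] by (simp add: CopOp)

lemma Cop_sum: "finite I \<Longrightarrow> Cop n t x (\<lambda>s. \<Sum>i\<in>I. f i s) s = (\<Sum>i\<in>I. Cop n t x (f i) s)"
proof (induction I rule: finite_induct)
  case empty
  then show ?case by (simp add: Cop_zero)
next
  case (insert a F)
  then show ?case by (simp add: CopOp Op_add)
qed

lemma Cprod_cong: "(\<And>i. 1 \<le> i \<Longrightarrow> i \<le> m \<Longrightarrow> z i = z' i) \<Longrightarrow> Cprod N t z m v = Cprod N t z' m v"
  by (induction m) auto

lemma Cprod_swap: "1 \<le> i \<Longrightarrow> i \<le> k \<Longrightarrow>
   Cop N t a (Cprod N t (z(i:=b)) k v) = Cop N t b (Cprod N t (z(i:=a)) k v)"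
proof (induction k)
  case 0
  then show ?case by simp
next
  case (Suc m)
  show ?case
  proof (cases "i = Suc m")
    case True
    have e1: "Cprod N t (z(i:=b)) m v = Cprod N t z m v" "Cprod N t (z(i:=a)) m v = Cprod N t z m v"
      using True by (auto intro: Cprod_cong)
    have "Cprod N t (z(i:=b)) (Suc m) v = Cop N t b (Cprod N t z m v)"
      using True e1(1) by simp
    moreover have "Cprod N t (z(i:=a)) (Suc m) v = Cop N t a (Cprod N t z m v)"
      using True e1(2) by simp
    ultimately show ?thesis using CC by metis
  next
    case False
    then have "i \<le> m" using Suc.prems by simp
    have IH: "Cop N t a (Cprod N t (z(i:=b)) m v) = Cop N t b (Cprod N t (z(i:=a)) m v)"
      using Suc.IH Suc.prems \<open>i \<le> m\<close> by blast
    have "Cprod N t (z(i:=b)) (Suc m) v = Cop N t (z (Suc m)) (Cprod N t (z(i:=b)) m v)"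
      "Cprod N t (z(i:=a)) (Suc m) v = Cop N t (z (Suc m)) (Cprod N t (z(i:=a)) m v)"
      using False by auto
    then show ?thesis using CC IH by metis
  qed
qed




lemma fr: "(a::complex) \<noteq> 0 \<Longrightarrow> b \<noteq> 0 \<Longrightarrow> e \<noteq> 0 \<Longrightarrow>
  q / (a * e) - q / ((- b) * e) = (a + b) * (q / (a * (b * e)))"
  by (simp add: field_simps)

lemma fr3: "(d::complex) \<noteq> 0 \<Longrightarrow> D \<noteq> 0 \<Longrightarrow> P \<noteq> 0 \<Longrightarrow>
   (q0 / D - q / P - d * S) / d = q0 / (D * d) - (S + q / (d * P))"
  by (simp add: field_simps)

lemma main: "inj_on y {1..k} \<Longrightarrow> x \<notin> y ` {1..k} \<Longrightarrow>
  Aop N t x (Cprod N t y k w) s =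
           Cprod N t y k (Aop N t x w) s / (\<Prod>j=1..k. x - y j)
         - (\<Sum>i=1..k. Cprod N t (y(i := x)) k (Aop N t (y i) w) s
              / ((x - y i) * (\<Prod>j\<in>{1..k} - {i}. y i - y j)))"
proof (induction k arbitrary: x s)
  case 0
  then show ?case by simp
next
  case (Suc k)
  define y' where "y' = y (Suc k)"
  have ivl: "{1..Suc k} = insert (Suc k) {1..k}" by auto
  have inj: "inj_on y {1..k}" by (rule inj_on_subset[OF Suc.prems(1)]) auto
  have xn: "x \<notin> y ` {1..k}" using Suc.prems(2) by auto
  have xy': "x \<noteq> y'" using Suc.prems(2) by (auto simp: y'_def)
  have y'n: "y' \<notin> y ` {1..k}"
  proof
    assume "y' \<in> y ` {1..k}"
    then obtain i where i: "i \<in> {1..k}" "y (Suc k) = y i" by (auto simp: y'_def)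
    then have "i = Suc k" using Suc.prems(1) using inj_onD[OF Suc.prems(1) i(2)] i(1) by simp
    then show False using i by simp
  qed
  define E where "E = (\<lambda>i. \<Prod>j\<in>{1..k} - {i}. y i - y j)"
  define D where "D = (\<Prod>j=1..k. x - y j)"
  define Pk where "Pk = (\<Prod>j=1..k. y' - y j)"
  have E0: "E i \<noteq> 0" if "i \<in> {1..k}" for i
    using that by (auto simp: E_def dest: inj_onD[OF inj])
  have D0: "D \<noteq> 0" using xn unfolding D_def by auto
  have Pk0: "Pk \<noteq> 0" using y'n unfolding Pk_def by auto
  define Q where "Q = (\<lambda>i. Cprod N t (y(i := x)) (Suc k) (Aop N t (y i) w) s)"
  define Q0 where "Q0 = Cprod N t y (Suc k) (Aop N t x w) s"
  have IH1: "Aop N t x (Cprod N t y k w) = (\<lambda>s. Cprod N t y k (Aop N t x w) s / D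
         - (\<Sum>i=1..k. Cprod N t (y(i := x)) k (Aop N t (y i) w) s / ((x - y i) * E i)))"
    unfolding D_def E_def by (rule ext, rule Suc.IH[OF inj xn])
  have IH2: "Aop N t y' (Cprod N t y k w) = (\<lambda>s. Cprod N t y k (Aop N t y' w) s / Pk
         - (\<Sum>i=1..k. Cprod N t (y(i := y')) k (Aop N t (y i) w) s / ((y' - y i) * E i)))"
    unfolding Pk_def E_def by (rule ext, rule Suc.IH[OF inj y'n])
  have L: "Aop N t x (Cprod N t y (Suc k) w) s =
     (Cop N t y' (Aop N t x (Cprod N t y k w)) s - Cop N t x (Aop N t y' (Cprod N t y k w)) s) / (x - y')"
    using ACrel[OF xy'] by (simp add: y'_def)
  have T1: "Cop N t y' (Aop N t x (Cprod N t y k w)) s = Q0 / D - (\<Sum>i=1..k. Q i / ((x - y i) * E i))"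
  proof -
    have "Cop N t y' (Aop N t x (Cprod N t y k w)) s = Cop N t y' (Cprod N t y k (Aop N t x w)) s / D
         - (\<Sum>i=1..k. Cop N t y' (Cprod N t (y(i := x)) k (Aop N t (y i) w)) s / ((x - y i) * E i))"
      unfolding IH1 by (simp add: Cop_diff Cop_div Cop_sum)
    also have "\<dots> = Q0 / D - (\<Sum>i=1..k. Q i / ((x - y i) * E i))"
    proof -
      have "(\<Sum>i=1..k. Cop N t y' (Cprod N t (y(i := x)) k (Aop N t (y i) w)) s / ((x - y i) * E i))
          = (\<Sum>i=1..k. Q i / ((x - y i) * E i))"
      proof (rule sum.cong)
        fix i assume i: "i \<in> {1..k}"
        then show "Cop N t y' (Cprod N t (y(i := x)) k (Aop N t (y i) w)) s / ((x - y i) * E i) = Q i / ((x - y i) * E i)"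
          unfolding Q_def y'_def by simp
      qed simp
      then show ?thesis unfolding Q0_def y'_def by simp
    qed
    finally show ?thesis .
  qed
  have T2: "Cop N t x (Aop N t y' (Cprod N t y k w)) s = Q (Suc k) / Pk - (\<Sum>i=1..k. Q i / ((y' - y i) * E i))"
  proof -
    have "Cop N t x (Aop N t y' (Cprod N t y k w)) s = Cop N t x (Cprod N t y k (Aop N t y' w)) s / Pk
         - (\<Sum>i=1..k. Cop N t x (Cprod N t (y(i := y')) k (Aop N t (y i) w)) s / ((y' - y i) * E i))"
      unfolding IH2 by (simp add: Cop_diff Cop_div Cop_sum)
    also have "Cop N t x (Cprod N t y k (Aop N t y' w)) s = Q (Suc k)"
    proof -
      have "Cprod N t (y(Suc k := x)) k v = Cprod N t y k v" for v by (rule Cprod_cong) auto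
      then show ?thesis by (simp add: Q_def y'_def)
    qed
    also have "(\<Sum>i=1..k. Cop N t x (Cprod N t (y(i := y')) k (Aop N t (y i) w)) s / ((y' - y i) * E i))
        = (\<Sum>i=1..k. Q i / ((y' - y i) * E i))"
    proof (rule sum.cong)
      fix i assume i: "i \<in> {1..k}"
      have "Cop N t x (Cprod N t (y(i := y')) k (Aop N t (y i) w)) = Cop N t y' (Cprod N t (y(i := x)) k (Aop N t (y i) w))"
        using i Cprod_swap[of i k N t x y y'] by auto
      then show "Cop N t x (Cprod N t (y(i := y')) k (Aop N t (y i) w)) s / ((y' - y i) * E i) = Q i / ((y' - y i) * E i)"
        using i unfolding Q_def y'_def by simp
    qed simp
    finally show ?thesis unfolding Q_def y'_def by simp
  qed
  define S1 where "S1 = (\<Sum>i=1..k. Q i / ((x - y i) * E i))"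
  define S2 where "S2 = (\<Sum>i=1..k. Q i / ((y' - y i) * E i))"
  define S3 where "S3 = (\<Sum>i=1..k. Q i / ((x - y i) * ((y i - y') * E i)))"
  have S: "S1 - S2 = (x - y') * S3"
  proof -
    have "S1 - S2 = (\<Sum>i=1..k. Q i / ((x - y i) * E i) - Q i / ((y' - y i) * E i))"
      unfolding S1_def S2_def by (simp add: sum_subtractf)
    also have "\<dots> = (\<Sum>i=1..k. (x - y') * (Q i / ((x - y i) * ((y i - y') * E i))))"
    proof (rule sum.cong)
      fix i assume i: "i \<in> {1..k}"
      have a: "x - y i \<noteq> 0" using xn i by auto
      have b: "y' - y i \<noteq> 0" "y i - y' \<noteq> 0" using y'n i by auto
      have c: "E i \<noteq> 0" using E0 i by auto
      show "Q i / ((x - y i) * E i) - Q i / ((y' - y i) * E i) = (x - y') * (Q i / ((x - y i) * ((y i - y') * E i)))"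
        using fr[OF a b(2) c, of "Q i"] by simp
    qed simp
    finally show ?thesis unfolding S3_def by (simp add: sum_distrib_left)
  qed
  have P1: "(\<Prod>j=1..Suc k. x - y j) = D * (x - y')"
    unfolding ivl D_def y'_def by (simp add: mult.commute)
  have P2: "(\<Prod>j\<in>{1..Suc k} - {i}. y i - y j) = (y i - y') * E i" if i: "i \<in> {1..k}" for i
  proof -
    have "{1..Suc k} - {i} = insert (Suc k) ({1..k} - {i})" using i by auto
    then show ?thesis unfolding E_def y'_def using i by simp
  qed
  have P3: "(\<Prod>j\<in>{1..Suc k} - {Suc k}. y (Suc k) - y j) = Pk"
  proof -
    have "{1..Suc k} - {Suc k} = {1..k}" by auto
    then show ?thesis unfolding Pk_def y'_def by simp
  qed
  have R: "(\<Sum>i=1..Suc k. Cprod N t (y(i := x)) (Suc k) (Aop N t (y i) w) s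
              / ((x - y i) * (\<Prod>j\<in>{1..Suc k} - {i}. y i - y j))) = S3 + Q (Suc k) / ((x - y') * Pk)"
  proof -
    have "(\<Sum>i=1..Suc k. Cprod N t (y(i := x)) (Suc k) (Aop N t (y i) w) s
              / ((x - y i) * (\<Prod>j\<in>{1..Suc k} - {i}. y i - y j)))
        = (\<Sum>i=1..k. Q i / ((x - y i) * (\<Prod>j\<in>{1..Suc k} - {i}. y i - y j))) + Q (Suc k) / ((x - y') * Pk)"
      unfolding ivl Q_def by (simp add: y'_def Pk_def)
    also have "(\<Sum>i=1..k. Q i / ((x - y i) * (\<Prod>j\<in>{1..Suc k} - {i}. y i - y j))) = S3"
      unfolding S3_def
    proof (rule sum.cong)
      fix i assume "i \<in> {1..k}"
      then show "Q i / ((x - y i) * (\<Prod>j\<in>{1..Suc k} - {i}. y i - y j)) = Q i / ((x - y i) * ((y i - y') * E i))"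
        using P2[OF \<open>i \<in> {1..k}\<close>] by simp
    qed simp
    finally show ?thesis .
  qed
  have "Aop N t x (Cprod N t y (Suc k) w) s = ((Q0 / D - S1) - (Q (Suc k) / Pk - S2)) / (x - y')"
    using L T1 T2 unfolding S1_def S2_def by simp
  also have "\<dots> = Q0 / (D * (x - y')) - (S3 + Q (Suc k) / ((x - y') * Pk))"
  proof -
    have "(Q0 / D - S1) - (Q (Suc k) / Pk - S2) = Q0 / D - Q (Suc k) / Pk - (S1 - S2)" by simp
    also have "\<dots> = Q0 / D - Q (Suc k) / Pk - (x - y') * S3" using S by simp
    finally have e: "(Q0 / D - S1) - (Q (Suc k) / Pk - S2) = Q0 / D - Q (Suc k) / Pk - (x - y') * S3" .
    have xy0: "x - y' \<noteq> 0" using xy' by simp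
    show ?thesis unfolding e using fr3[OF xy0 D0 Pk0] by simp
  qed
  finally show ?case unfolding P1 R Q0_def .
qed


theorem lemma2p8:
  fixes N k :: nat and t y :: "nat \<Rightarrow> complex" and x :: complex
    and w :: vec and s :: state
  assumes "N \<ge> 2"
    and "inj_on y {1..k}"
    and "x \<notin> y ` {1..k}"
  shows "Aop N t x (Cprod N t y k w) s =
           Cprod N t y k (Aop N t x w) s / (\<Prod>j=1..k. x - y j)
         - (\<Sum>i=1..k. Cprod N t (y(i := x)) k (Aop N t (y i) w) s
              / ((x - y i) * (\<Prod>j\<in>{1..k} - {i}. y i - y j)))"
  using main[OF assms(2) assms(3)] .

end
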